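(* Let $X\subset\mathbb{R}^{2n}$ be a symplectically self-polar convex body with $C^2$-smooth boundary. Let $\gamma\colon I\to\partial X$ ($I$ an interval) be a characteristic curve of $\partial X$, and suppose that $\delta=f\circ\gamma$ is also a characteristic curve of $\partial X$. Then $\gamma$ and $\delta$ are planar curves: both are contained in a two-dimensional linear subspace of $\mathbb{R}^{2n}$.
   Context: $\mathbb{R}^{2n}\cong\mathbb{C}^n$, $J$ is multiplication by $\sqrt{-1}$, $\omega(u,v)=\langle Ju,v\rangle$. For a convex body $X$ with origin in its interior, $X^\omega=\{y: \omega(x,y)\le 1\ \forall x\in X\}$; $X$ is symplectically self-polar if $X=X^\omega$. For $C^1$ boundary, $f\colon\partial X\to\partial X^\omega$ assigns to $x$ the unique $f(x)\in X^\omega$ with $\omega(x,f(x))=1$; when $X=X^\omega$, $f$ maps $\partial X$ to itself. The characteristic line of a hypersurface $\Sigma$ at $p$ is $\ker(\omega|_{T_p\Sigma})$; a characteristic curve of $\Sigma$ is a $C^1$ curve in $\Sigma$ whose velocity at each time lies in the characteristic line at the current point. *)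

theory Defs
  imports "HOL-Analysis.Analysis"
begin

text \<open>R^{2n} is identified with C^n, realised as the type complex^'n
  (a real Euclidean space of real dimension 2 CARD('n)).\<close>

definition cJ :: "complex ^ 'n \<Rightarrow> complex ^ 'n" where
  "cJ u = (\<chi> k. \<i> * u $ k)"

definition symp_form :: "complex ^ 'n \<Rightarrow> complex ^ 'n \<Rightarrow> real" where
  "symp_form u v = inner (cJ u) v"

definition symp_polar :: "(complex ^ 'n) set \<Rightarrow> (complex ^ 'n) set" where
  "symp_polar X = {y. \<forall>x\<in>X. symp_form x y \<le> 1}"

definition convex_body :: "'a::euclidean_space set \<Rightarrow> bool" where
  "convex_body X \<longleftrightarrow> compact X \<and> convex X \<and> interior X \<noteq> {}"

definition C2_boundary :: "'a::euclidean_space set \<Rightarrow> bool" where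
  "C2_boundary X \<longleftrightarrow> (\<forall>p\<in>frontier X. \<exists>U g grad G.
      open U \<and> p \<in> U \<and> X \<inter> U = {x\<in>U. g x \<le> (0::real)} \<and>
      (\<forall>x\<in>U. (g has_derivative (\<lambda>h. inner (grad x) h)) (at x)) \<and>
      (\<forall>x\<in>U. grad x \<noteq> 0) \<and>
      (\<forall>x\<in>U. (grad has_derivative blinfun_apply (G x)) (at x)) \<and>
      continuous_on U (G :: 'a \<Rightarrow> 'a \<Rightarrow>\<^sub>L 'a))"

text \<open>The map f: for x in the boundary of X, f x is the unique point of the
  symplectic polar with omega(x, f x) = 1.\<close>
definition polar_map :: "(complex ^ 'n) set \<Rightarrow> complex ^ 'n \<Rightarrow> complex ^ 'n" where
  "polar_map X x = (THE y. y \<in> symp_polar X \<and> symp_form x y = 1)"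

definition tangent_space :: "'a::real_normed_vector set \<Rightarrow> 'a \<Rightarrow> 'a set" where
  "tangent_space S p = {v. \<exists>c e. e > 0 \<and> c ` {-e<..<e} \<subseteq> S \<and> c 0 = p \<and>
      (c has_vector_derivative v) (at 0)}"

definition char_line :: "(complex ^ 'n) set \<Rightarrow> complex ^ 'n \<Rightarrow> (complex ^ 'n) set" where
  "char_line S p = {v \<in> tangent_space S p. \<forall>w\<in>tangent_space S p. symp_form v w = 0}"

definition characteristic_curve ::
  "(complex ^ 'n) set \<Rightarrow> real set \<Rightarrow> (real \<Rightarrow> complex ^ 'n) \<Rightarrow> bool" where
  "characteristic_curve S I c \<longleftrightarrow> c ` I \<subseteq> S \<and>
     (\<exists>c'. (\<forall>t\<in>I. (c has_vector_derivative c' t) (at t within I)) \<and>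
           continuous_on I c' \<and> (\<forall>t\<in>I. c' t \<in> char_line S (c t)))"

end

theory Submission
  imports Defs
begin



lemma cJ_nth[simp]: "cJ u $ k = \<i> * u $ k" by (simp add: cJ_def)
lemma cJ_add: "cJ (u + v) = cJ u + cJ v" by (simp add: cJ_def vec_eq_iff algebra_simps)
lemma cJ_scaleR: "cJ (c *\<^sub>R u) = c *\<^sub>R cJ u" by (simp add: vec_eq_iff scaleR_conv_of_real)
lemma cJ_minus: "cJ (- u) = - cJ u" by (simp add: vec_eq_iff)
lemma cJ_diff: "cJ (u - v) = cJ u - cJ v" by (simp add: vec_eq_iff algebra_simps)
lemma cJ_zero[simp]: "cJ 0 = 0" by (simp add: vec_eq_iff)
lemma cJ_cJ[simp]: "cJ (cJ u) = - u" by (simp add: vec_eq_iff)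
lemma linear_cJ: "linear cJ" by (rule linearI) (simp_all add: cJ_add cJ_scaleR)
lemma bounded_linear_cJ: "bounded_linear cJ" using linear_cJ by (simp add: linear_conv_bounded_linear)
lemma inner_cJ_cJ[simp]: "inner (cJ u) (cJ v) = inner u v"
  by (simp add: inner_vec_def inner_complex_def add.commute)
lemma inner_cJ_swap: "inner (cJ u) v = - inner u (cJ v)"
  by (simp add: inner_vec_def inner_complex_def sum_negf[symmetric] algebra_simps)
lemma cJ_eq_iff[simp]: "cJ u = cJ v \<longleftrightarrow> u = v"
  by (metis cJ_cJ minus_equation_iff)
lemma cJ_eq_0_iff[simp]: "cJ u = 0 \<longleftrightarrow> u = 0" using cJ_eq_iff[of u 0] by simp
lemma symp_self[simp]: "symp_form u u = 0"
  unfolding symp_form_def using inner_cJ_swap[of u u] by (simp add: inner_commute)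
lemma symp_antisym: "symp_form u v = - symp_form v u"
  unfolding symp_form_def using inner_cJ_swap[of u v] by (simp add: inner_commute)
lemma symp_scaleR_right[simp]: "symp_form u (c *\<^sub>R v) = c * symp_form u v"
  by (simp add: symp_form_def)
lemma symp_scaleR_left[simp]: "symp_form (c *\<^sub>R u) v = c * symp_form u v"
  by (simp add: symp_form_def cJ_scaleR)
lemma symp_add_left: "symp_form (u + w) v = symp_form u v + symp_form w v"
  by (simp add: symp_form_def cJ_add inner_add_left)
lemma symp_diff_left: "symp_form (u - w) v = symp_form u v - symp_form w v"
  by (simp add: symp_form_def cJ_diff inner_diff_left)
lemma symp_add_right: "symp_form u (v + w) = symp_form u v + symp_form u w"
  by (simp add: symp_form_def inner_add_right)
lemma symp_diff_right: "symp_form u (v - w) = symp_form u v - symp_form u w"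
  by (simp add: symp_form_def inner_diff_right)
lemma symp_zero[simp]: "symp_form 0 v = 0" "symp_form u 0 = 0" by (simp_all add: symp_form_def)




lemma tangent_space_mono: "S \<subseteq> T \<Longrightarrow> tangent_space S p \<subseteq> tangent_space T p"
  unfolding tangent_space_def by blast

lemma tangent_support:
  fixes u :: "'a::real_inner"
  assumes "w \<in> tangent_space S x" "S \<subseteq> X" "\<forall>z\<in>X. inner u z \<le> inner u x"
  shows "inner u w = 0"
proof -
  obtain c e where ce: "e > 0" "c ` {-e<..<e} \<subseteq> S" "c 0 = x" "(c has_vector_derivative w) (at 0)"
    using assms(1) unfolding tangent_space_def by blast
  have D: "((\<lambda>s. inner u (c s)) has_real_derivative inner u w) (at 0)"
    using ce(4) unfolding has_real_derivative_iff_has_vector_derivative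
    by (rule bounded_linear.has_vector_derivative[OF bounded_linear_inner_right])
  show ?thesis
  proof (rule DERIV_local_max[OF D ce(1)], intro allI impI)
    fix y :: real assume "\<bar>0 - y\<bar> < e"
    then have "y \<in> {-e<..<e}" by auto
    then have "c y \<in> X" using ce(2) assms(2) by blast
    then show "inner u (c y) \<le> inner u (c 0)" using assms(3) ce(3) by auto
  qed
qed

lemma orth_parallel:
  fixes n a :: "'a::real_inner"
  assumes "n \<noteq> 0" "\<forall>w. inner n w = 0 \<longrightarrow> inner a w = 0"
  shows "a = (inner a n / inner n n) *\<^sub>R n"
proof -
  define c where "c = inner a n / inner n n"
  define w where "w = a - c *\<^sub>R n"
  have nn: "inner n n \<noteq> 0" using assms(1) by simp
  have "inner n w = 0" unfolding w_def c_def using nn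
    by (simp add: inner_diff_right inner_commute)
  then have "inner a w = 0" using assms(2) by blast
  then have "inner w w = 0" using \<open>inner n w = 0\<close>
    by (simp add: w_def inner_diff_left inner_commute)
  then show ?thesis unfolding w_def c_def by simp
qed




lemma tangent_construct:
  fixes g :: "'a::euclidean_space \<Rightarrow> real"
  assumes U: "open U" "x \<in> U"
    and dg: "\<forall>z\<in>U. (g has_derivative (\<lambda>h. inner (grad z) h)) (at z)"
    and gx: "g x = 0" and n0: "grad x \<noteq> 0"
    and w: "inner (grad x) w = 0"
  shows "w \<in> tangent_space {z\<in>U. g z = 0} x"
proof -
  define n where "n = grad x"
  define N where "N = inner n n"
  define L where "L = norm w + norm n + 1"
  have N0: "N > 0" using n0 by (simp add: N_def n_def)
  have L0: "L > 0" by (simp add: L_def add_nonneg_pos)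
  obtain d2 where d2: "d2 > 0" "ball x d2 \<subseteq> U" using U open_contains_ball by blast
  have dgx: "(g has_derivative (\<lambda>h. inner n h)) (at x)" using dg U(2) n_def by blast
  have key: "\<exists>d>0. \<forall>s h. \<bar>s\<bar> < d \<longrightarrow> \<bar>h\<bar> \<le> \<bar>s\<bar> \<longrightarrow>
      x + s *\<^sub>R w + h *\<^sub>R n \<in> U \<and> \<bar>g (x + s *\<^sub>R w + h *\<^sub>R n) - h * N\<bar> \<le> \<epsilon> * \<bar>s\<bar>"
    if "\<epsilon> > 0" for \<epsilon>
  proof -
    obtain d1 where d1: "d1 > 0" "\<forall>y. norm (y - x) < d1 \<longrightarrow>
        norm (g y - g x - inner n (y - x)) \<le> (\<epsilon> / L) * norm (y - x)"
      using dgx[unfolded has_derivative_at_alt] \<open>\<epsilon> > 0\<close> L0 by (meson divide_pos_pos)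
    define d where "d = min d1 d2 / L"
    have d0: "d > 0" using d1 d2 L0 by (simp add: d_def)
    show ?thesis
    proof (rule exI[of _ d], intro conjI allI impI d0)
      fix s h :: real assume s: "\<bar>s\<bar> < d" and h: "\<bar>h\<bar> \<le> \<bar>s\<bar>"
      define y where "y = x + s *\<^sub>R w + h *\<^sub>R n"
      have "norm (y - x) \<le> \<bar>s\<bar> * norm w + \<bar>h\<bar> * norm n"
        unfolding y_def using norm_triangle_ineq[of "s *\<^sub>R w" "h *\<^sub>R n"] by simp
      also have "\<dots> \<le> \<bar>s\<bar> * norm w + \<bar>s\<bar> * norm n"
        using h by (simp add: mult_right_mono)
      also have "\<dots> \<le> \<bar>s\<bar> * L" by (simp add: L_def algebra_simps)
      finally have ny: "norm (y - x) \<le> \<bar>s\<bar> * L" .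
      have "\<bar>s\<bar> * L < d * L" using s L0 by simp
      also have "d * L = min d1 d2" using L0 by (simp add: d_def)
      finally have lt: "norm (y - x) < min d1 d2" using ny by linarith
      then have "y \<in> ball x d2" by (simp add: dist_norm norm_minus_commute)
      then show "x + s *\<^sub>R w + h *\<^sub>R n \<in> U" using d2 y_def by blast
      have "inner n (y - x) = h * N" unfolding y_def N_def n_def
        using w by (simp add: inner_add_right)
      then have "\<bar>g y - h * N\<bar> \<le> (\<epsilon> / L) * norm (y - x)"
        using d1(2) lt gx by auto
      also have "\<dots> \<le> (\<epsilon> / L) * (\<bar>s\<bar> * L)"
        using ny \<open>\<epsilon> > 0\<close> L0 by (intro mult_left_mono) auto
      also have "\<dots> = \<epsilon> * \<bar>s\<bar>" using L0 by simp
      finally show "\<bar>g (x + s *\<^sub>R w + h *\<^sub>R n) - h * N\<bar> \<le> \<epsilon> * \<bar>s\<bar>" by (simp add: y_def)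
    qed
  qed
  obtain e where e: "e > 0" "\<forall>s h. \<bar>s\<bar> < e \<longrightarrow> \<bar>h\<bar> \<le> \<bar>s\<bar> \<longrightarrow>
      x + s *\<^sub>R w + h *\<^sub>R n \<in> U \<and> \<bar>g (x + s *\<^sub>R w + h *\<^sub>R n) - h * N\<bar> \<le> (N/2) * \<bar>s\<bar>"
    using key[of "N/2"] N0 by auto
  have contg: "continuous_on U g"
    using dg has_derivative_continuous continuous_at_imp_continuous_on by blast
  have root: "\<exists>h. \<bar>h\<bar> \<le> \<bar>s\<bar> \<and> g (x + s *\<^sub>R w + h *\<^sub>R n) = 0" if s: "\<bar>s\<bar> < e" for s
  proof -
    define f where "f h = g (x + s *\<^sub>R w + h *\<^sub>R n)" for h
    have sub: "(\<lambda>h. x + s *\<^sub>R w + h *\<^sub>R n) ` {-\<bar>s\<bar>..\<bar>s\<bar>} \<subseteq> U"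
      using e(2) s by auto
    have cf: "continuous_on {-\<bar>s\<bar>..\<bar>s\<bar>} f"
      unfolding f_def
      by (rule continuous_on_compose2[OF contg _ sub]) (intro continuous_intros)
    have "\<bar>f \<bar>s\<bar> - \<bar>s\<bar> * N\<bar> \<le> (N/2) * \<bar>s\<bar>" using e(2) s by (simp add: f_def)
    moreover have "0 \<le> \<bar>s\<bar> * N" using N0 by simp
    ultimately have fa: "f \<bar>s\<bar> \<ge> 0" by (simp only: abs_le_iff) (simp add: algebra_simps)
    have "\<bar>f (-\<bar>s\<bar>) + \<bar>s\<bar> * N\<bar> \<le> (N/2) * \<bar>s\<bar>" using e(2)[rule_format, of s "-\<bar>s\<bar>"] s
      by (simp add: f_def)
    moreover have "0 \<le> \<bar>s\<bar> * N" using N0 by simp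
    ultimately have fb: "f (-\<bar>s\<bar>) \<le> 0" by (simp only: abs_le_iff) (simp add: algebra_simps)
    obtain h where "-\<bar>s\<bar> \<le> h" "h \<le> \<bar>s\<bar>" "f h = 0"
      using IVT'[of f "-\<bar>s\<bar>" 0 "\<bar>s\<bar>", OF fb fa _ cf] by auto
    then show ?thesis unfolding f_def by (intro exI[of _ h]) auto
  qed
  define hh where "hh s = (SOME h. \<bar>h\<bar> \<le> \<bar>s\<bar> \<and> g (x + s *\<^sub>R w + h *\<^sub>R n) = 0)" for s
  have hh: "\<bar>hh s\<bar> \<le> \<bar>s\<bar> \<and> g (x + s *\<^sub>R w + hh s *\<^sub>R n) = 0" if "\<bar>s\<bar> < e" for s
    unfolding hh_def using someI_ex[OF root[OF that]] .
  define c where "c s = x + s *\<^sub>R w + hh s *\<^sub>R n" for s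
  have hh0: "hh 0 = 0" using hh[of 0] e(1) by simp
  have img: "c ` {-e<..<e} \<subseteq> {z\<in>U. g z = 0}"
  proof
    fix z assume "z \<in> c ` {-e<..<e}"
    then obtain s where s: "\<bar>s\<bar> < e" "z = c s" by (force simp: abs_less_iff)
    then show "z \<in> {z\<in>U. g z = 0}" using hh[OF s(1)] e(2) unfolding c_def by auto
  qed
  have dh: "(hh has_derivative (\<lambda>s. 0 * s)) (at 0)"
    unfolding has_derivative_at_alt
  proof (intro conjI allI impI)
    show "bounded_linear (\<lambda>s::real. 0 * s)" by simp
    fix \<epsilon> :: real assume "\<epsilon> > 0"
    obtain d3 where d3: "d3 > 0" "\<forall>s h. \<bar>s\<bar> < d3 \<longrightarrow> \<bar>h\<bar> \<le> \<bar>s\<bar> \<longrightarrow>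
      x + s *\<^sub>R w + h *\<^sub>R n \<in> U \<and> \<bar>g (x + s *\<^sub>R w + h *\<^sub>R n) - h * N\<bar> \<le> (\<epsilon> * N) * \<bar>s\<bar>"
      using key[of "\<epsilon> * N"] N0 \<open>\<epsilon> > 0\<close> by auto
    show "\<exists>d>0. \<forall>y. norm (y - 0) < d \<longrightarrow> norm (hh y - hh 0 - 0 * (y - 0)) \<le> \<epsilon> * norm (y - 0)"
    proof (rule exI[of _ "min d3 e"], intro conjI allI impI)
      show "min d3 e > 0" using d3 e by simp
      fix y :: real assume "norm (y - 0) < min d3 e"
      then have y: "\<bar>y\<bar> < d3" "\<bar>y\<bar> < e" by auto
      have "\<bar>hh y * N\<bar> \<le> (\<epsilon> * N) * \<bar>y\<bar>"
        using d3(2)[rule_format, OF y(1), of "hh y"] hh[OF y(2)] by simp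
      then have "\<bar>hh y\<bar> * N \<le> (\<epsilon> * \<bar>y\<bar>) * N" using N0 by (simp add: abs_mult algebra_simps)
      then have "\<bar>hh y\<bar> \<le> \<epsilon> * \<bar>y\<bar>" using N0 by simp
      then show "norm (hh y - hh 0 - 0 * (y - 0)) \<le> \<epsilon> * norm (y - 0)" using hh0 by simp
    qed
  qed
  have dc: "(c has_vector_derivative w) (at 0)"
  proof -
    have h': "(hh has_real_derivative 0) (at 0)" using dh unfolding has_field_derivative_def .
    have d1: "((\<lambda>s. hh s *\<^sub>R n) has_vector_derivative (hh 0 *\<^sub>R 0 + 0 *\<^sub>R n)) (at 0)"
      by (rule has_vector_derivative_scaleR[OF h' has_vector_derivative_const])
    have d2: "((\<lambda>s. s *\<^sub>R w) has_vector_derivative (0 *\<^sub>R 0 + 1 *\<^sub>R w)) (at 0)"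
      by (rule has_vector_derivative_scaleR[OF DERIV_ident has_vector_derivative_const])
    have "((\<lambda>s. x + s *\<^sub>R w + hh s *\<^sub>R n) has_vector_derivative (0 + (0 *\<^sub>R 0 + 1 *\<^sub>R w) + (hh 0 *\<^sub>R 0 + 0 *\<^sub>R n))) (at 0)"
      by (intro has_vector_derivative_add d1 d2 has_vector_derivative_const)
    then show ?thesis unfolding c_def by simp
  qed
  show ?thesis unfolding tangent_space_def
    using e(1) img dc hh0 by (intro CollectI exI[of _ c] exI[of _ e]) (auto simp: c_def)
qed




lemma frontier_normal:
  fixes X :: "'a::euclidean_space set"
  assumes cl: "closed X" and C2: "C2_boundary X" and x: "x \<in> frontier X"
  shows "\<exists>n. n \<noteq> 0 \<and> (\<forall>w. inner n w = 0 \<longrightarrow> w \<in> tangent_space (frontier X) x)"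
proof -
  from C2[unfolded C2_boundary_def, rule_format, OF x] obtain U g grad G where U: "open U" "x \<in> U" "X \<inter> U = {z\<in>U. g z \<le> (0::real)}"
    and dg: "\<forall>z\<in>U. (g has_derivative (\<lambda>h. inner (grad z) h)) (at z)"
    and gn: "\<forall>z\<in>U. grad z \<noteq> 0"
    by blast
  have xX: "x \<in> X" using x cl by (simp add: frontier_def closure_closed)
  have xi: "x \<notin> interior X" using x by (simp add: frontier_def)
  have inX: "\<And>z. z \<in> U \<Longrightarrow> g z \<le> 0 \<Longrightarrow> z \<in> X" using U(3) by (auto simp: set_eq_iff)
  have gX: "\<And>z. z \<in> U \<Longrightarrow> z \<in> X \<Longrightarrow> g z \<le> 0" using U(3) by (auto simp: set_eq_iff)
  have gle: "g x \<le> 0" using U(2) xX by (rule gX)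
  have gx: "g x = 0"
  proof (rule ccontr)
    assume "g x \<noteq> 0"
    then have "g x < 0" using gle by simp
    have "isCont g x" using has_derivative_continuous[OF dg[rule_format, OF U(2)]] .
    have "\<forall>\<^sub>F z in at x. g z < 0"
      using order_tendstoD(2)[OF \<open>isCont g x\<close>[unfolded isCont_def] \<open>g x < 0\<close>] .
    then have "\<forall>\<^sub>F z in nhds x. g z < 0" using \<open>g x < 0\<close> by (simp add: eventually_nhds_conv_at)
    moreover have "\<forall>\<^sub>F z in nhds x. z \<in> U" using U by (simp add: eventually_nhds_in_open)
    ultimately have "\<forall>\<^sub>F z in nhds x. z \<in> X" by eventually_elim (simp add: inX)
    then have "x \<in> interior X" unfolding eventually_nhds by (meson interiorI subsetI)
    with xi show False by simp
  qed
  have sub: "{z\<in>U. g z = 0} \<subseteq> frontier X"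
  proof
    fix z assume z: "z \<in> {z\<in>U. g z = 0}"
    then have zX: "z \<in> X" using inX by simp
    have "z \<notin> interior X"
    proof
      assume "z \<in> interior X"
      then have zi: "z \<in> interior X \<inter> U" using z by simp
      have "\<forall>y\<in>interior X \<inter> U. g y \<le> g z" using z gX interior_subset by fastforce
      then have "(\<lambda>h. inner (grad z) h) = (\<lambda>v. 0)"
        using differential_zero_maxmin[OF zi _ dg[rule_format, of z]] U(1) z by auto
      then have "inner (grad z) (grad z) = 0" by (metis (no_types))
      then show False using gn z by simp
    qed
    then show "z \<in> frontier X" using zX by (simp add: frontier_def closure_closed cl)
  qed
  show ?thesis
  proof (intro exI[of _ "grad x"] conjI allI impI)
    show "grad x \<noteq> 0" using gn U(2) by simp
    fix w assume "inner (grad x) w = 0"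
    then have "w \<in> tangent_space {z\<in>U. g z = 0} x"
      using tangent_construct[OF U(1,2) dg gx] gn U(2) by simp
    then show "w \<in> tangent_space (frontier X) x" using tangent_space_mono[OF sub] by blast
  qed
qed




lemma normal_props:
  fixes X :: "(complex ^ 'n) set"
  assumes cl: "closed X" and C2: "C2_boundary X" and x: "x \<in> frontier X"
  shows "\<exists>n. n \<noteq> 0 \<and> (\<forall>u. (\<forall>z\<in>X. inner u z \<le> inner u x) \<longrightarrow> (\<exists>c. u = c *\<^sub>R n))
     \<and> (\<forall>v\<in>char_line (frontier X) x. \<exists>c. cJ v = c *\<^sub>R n)"
proof -
  obtain n where n: "n \<noteq> 0" "\<forall>w. inner n w = 0 \<longrightarrow> w \<in> tangent_space (frontier X) x"
    using frontier_normal[OF cl C2 x] by blast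
  have fX: "frontier X \<subseteq> X" using cl by (simp add: frontier_subset_closed)
  show ?thesis
  proof (intro exI[of _ n] conjI allI impI ballI n(1))
    fix u assume u: "\<forall>z\<in>X. inner u z \<le> inner u x"
    have "\<forall>w. inner n w = 0 \<longrightarrow> inner u w = 0"
      using tangent_support[OF _ fX u] n(2) by blast
    then show "\<exists>c. u = c *\<^sub>R n" using orth_parallel[OF n(1)] by blast
  next
    fix v assume v: "v \<in> char_line (frontier X) x"
    have "\<forall>w. inner n w = 0 \<longrightarrow> inner (cJ v) w = 0"
      using v n(2) unfolding char_line_def symp_form_def by blast
    then show "\<exists>c. cJ v = c *\<^sub>R n" using orth_parallel[OF n(1)] by blast
  qed
qed

lemma char_par:
  fixes X :: "(complex ^ 'n) set"
  assumes cl: "closed X" and C2: "C2_boundary X" and x: "x \<in> frontier X"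
    and u: "u \<noteq> 0" "\<forall>z\<in>X. inner u z \<le> inner u x"
    and v: "v \<in> char_line (frontier X) x"
  shows "\<exists>k. cJ v = k *\<^sub>R u"
proof -
  obtain n where n: "n \<noteq> 0" "\<forall>u. (\<forall>z\<in>X. inner u z \<le> inner u x) \<longrightarrow> (\<exists>c. u = c *\<^sub>R n)"
     "\<forall>v\<in>char_line (frontier X) x. \<exists>c. cJ v = c *\<^sub>R n"
    using normal_props[OF cl C2 x] by blast
  obtain c where c: "u = c *\<^sub>R n" using n(2) u(2) by blast
  obtain d where d: "cJ v = d *\<^sub>R n" using n(3) v by blast
  have "c \<noteq> 0" using c u(1) by auto
  then have "cJ v = (d / c) *\<^sub>R u" using c d by simp
  then show ?thesis by blast
qed

lemma support_unique:
  fixes X :: "(complex ^ 'n) set"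
  assumes cl: "closed X" and C2: "C2_boundary X" and x: "x \<in> frontier X"
    and u1: "\<forall>z\<in>X. inner u1 z \<le> inner u1 x" "inner u1 x = 1"
    and u2: "\<forall>z\<in>X. inner u2 z \<le> inner u2 x" "inner u2 x = 1"
  shows "u1 = u2"
proof -
  obtain n where n: "n \<noteq> 0" "\<forall>u. (\<forall>z\<in>X. inner u z \<le> inner u x) \<longrightarrow> (\<exists>c. u = c *\<^sub>R n)"
    using normal_props[OF cl C2 x] by blast
  obtain c1 where c1: "u1 = c1 *\<^sub>R n" using n(2) u1(1) by blast
  obtain c2 where c2: "u2 = c2 *\<^sub>R n" using n(2) u2(1) by blast
  have "c1 * inner n x = 1" "c2 * inner n x = 1" using c1 c2 u1(2) u2(2) by auto
  then have "c1 = c2" by (metis mult_cancel_right mult_zero_left zero_neq_one)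
  then show ?thesis using c1 c2 by simp
qed

lemma support_of_polar:
  fixes X :: "(complex ^ 'n) set"
  assumes "symp_polar X = X" "y \<in> X"
  shows "\<forall>z\<in>X. inner (- cJ y) z \<le> 1"
proof
  fix z assume "z \<in> X"
  then have "symp_form z y \<le> 1" using assms unfolding symp_polar_def by blast
  then show "inner (- cJ y) z \<le> 1" unfolding symp_form_def
    using inner_cJ_swap[of z y] by (simp add: inner_commute)
qed

lemma inner_negcJ: "inner (- cJ y) x = symp_form x y"
  unfolding symp_form_def using inner_cJ_swap[of x y] by (simp add: inner_commute)




lemma polar_map_props:
  fixes X :: "(complex ^ 'n) set"
  assumes cb: "convex_body X" and X0: "0 \<in> interior X" and sp: "symp_polar X = X"
    and C2: "C2_boundary X" and x: "x \<in> frontier X"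
  shows "polar_map X x \<in> X \<and> symp_form x (polar_map X x) = 1"
proof -
  have cl: "closed X" and cv: "convex X" and ne: "interior X \<noteq> {}"
    using cb unfolding convex_body_def by (auto simp: compact_imp_closed)
  have xX: "x \<in> X" using x cl by (simp add: frontier_def closure_closed)
  have xni: "x \<notin> rel_interior X" using x ne by (simp add: frontier_def rel_interior_nonempty_interior)
  have xc: "x \<in> closure X" using xX closure_subset by blast
  obtain a where a: "a \<noteq> 0" "\<And>y. y \<in> closure X \<Longrightarrow> a \<bullet> x \<le> a \<bullet> y"
    using supporting_hyperplane_relative_frontier[OF cv xc xni] by metis
  define u where "u = - a"
  have u0: "u \<noteq> 0" using a(1) by (simp add: u_def)
  have usup: "\<forall>z\<in>X. inner u z \<le> inner u x"
  proof
    fix z assume "z \<in> X"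
    then have "a \<bullet> x \<le> a \<bullet> z" using a(2) closure_subset by blast
    then show "inner u z \<le> inner u x" by (simp add: u_def)
  qed
  obtain r where r: "r > 0" "ball 0 r \<subseteq> X" using X0 unfolding mem_interior by blast
  define q where "q = (r / 2 / norm u) *\<^sub>R u"
  have "norm q = \<bar>r / 2 / norm u\<bar> * norm u" by (simp only: q_def norm_scaleR)
  also have "\<dots> = r / 2" using u0 r by simp
  finally have "norm q = r / 2" .
  then have "q \<in> ball 0 r" using r by simp
  then have "q \<in> X" using r(2) by blast
  have "inner u q = (r / 2 / norm u) * (norm u)^2" by (simp only: q_def inner_scaleR_right dot_square_norm)
  also have "\<dots> = r / 2 * norm u" using u0 by (simp add: power2_eq_square)
  finally have "inner u q = r / 2 * norm u" .
  also have "\<dots> > 0" using u0 r by simp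
  finally have "inner u q > 0" .
  moreover have "inner u q \<le> inner u x" using usup \<open>q \<in> X\<close> by blast
  ultimately have ux: "inner u x > 0" by linarith
  define u' where "u' = (1 / inner u x) *\<^sub>R u"
  define y0 where "y0 = cJ u'"
  have y0X: "y0 \<in> X"
  proof -
    have "\<forall>z\<in>X. symp_form z y0 \<le> 1"
    proof
      fix z assume "z \<in> X"
      then have "inner u z \<le> inner u x" using usup by blast
      then have "inner u z / inner u x \<le> 1" using ux by simp
      then show "symp_form z y0 \<le> 1" by (simp add: symp_form_def y0_def u'_def cJ_scaleR inner_commute)
    qed
    then show ?thesis using sp unfolding symp_polar_def by blast
  qed
  have y01: "symp_form x y0 = 1" using ux by (simp add: symp_form_def y0_def u'_def cJ_scaleR inner_commute)
  have uniq: "y = y0" if "y \<in> X \<and> symp_form x y = 1" for y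
  proof -
    have "- cJ y = - cJ y0"
    proof (rule support_unique[OF cl C2 x])
      have h1: "inner (- cJ y) x = 1" using that by (simp only: inner_negcJ)
      have h2: "inner (- cJ y0) x = 1" using y01 by (simp only: inner_negcJ)
      show "\<forall>z\<in>X. inner (- cJ y) z \<le> inner (- cJ y) x"
        unfolding h1 using support_of_polar[OF sp] that by blast
      show "\<forall>z\<in>X. inner (- cJ y0) z \<le> inner (- cJ y0) x"
        unfolding h2 using support_of_polar[OF sp y0X] .
      show "inner (- cJ y) x = 1" by (rule h1)
      show "inner (- cJ y0) x = 1" by (rule h2)
    qed
    then show ?thesis by simp
  qed
  have "polar_map X x = y0" unfolding polar_map_def sp
  proof (rule the_equality)
    show "y0 \<in> X \<and> symp_form x y0 = 1" using y0X y01 by (rule conjI)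
    show "\<And>y. y \<in> X \<and> symp_form x y = 1 \<Longrightarrow> y = y0" by (rule uniq)
  qed




  then show ?thesis using y0X y01 by simp
qed




lemma symp_minus_right[simp]: "symp_form u (- v) = - symp_form u v"
  by (simp add: symp_form_def)
lemma symp_minus_left[simp]: "symp_form (- u) v = - symp_form u v"
  by (simp add: symp_form_def cJ_minus)

lemma char_gamma:
  fixes X :: "(complex ^ 'n) set"
  assumes cb: "convex_body X" and X0: "0 \<in> interior X" and sp: "symp_polar X = X"
    and C2: "C2_boundary X" and x: "x \<in> frontier X"
    and v: "v \<in> char_line (frontier X) x"
  shows "v = symp_form x v *\<^sub>R polar_map X x"
proof -
  define y where "y = polar_map X x"
  have cl: "closed X" using cb unfolding convex_body_def by (auto simp: compact_imp_closed)
  have y: "y \<in> X" "symp_form x y = 1" using polar_map_props[OF cb X0 sp C2 x] y_def by auto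
  have y0: "y \<noteq> 0" using y(2) by auto
  have h1: "inner (- cJ y) x = 1" using y(2) by (simp only: inner_negcJ)
  have sup: "\<forall>z\<in>X. inner (- cJ y) z \<le> inner (- cJ y) x"
    unfolding h1 using support_of_polar[OF sp y(1)] .
  have u0: "- cJ y \<noteq> 0" using y0 by simp
  obtain k where k: "cJ v = k *\<^sub>R (- cJ y)" using char_par[OF cl C2 x u0 sup v] by blast
  then have "cJ v = cJ ((- k) *\<^sub>R y)" by (simp add: cJ_scaleR cJ_minus)
  then have vk: "v = (- k) *\<^sub>R y" by simp
  then have "symp_form x v = - k" using y(2) by simp
  then show ?thesis using vk y_def by simp
qed

lemma char_delta:
  fixes X :: "(complex ^ 'n) set"
  assumes cb: "convex_body X" and X0: "0 \<in> interior X" and sp: "symp_polar X = X"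
    and C2: "C2_boundary X" and x: "x \<in> frontier X"
    and yf: "polar_map X x \<in> frontier X"
    and v: "v \<in> char_line (frontier X) (polar_map X x)"
  shows "v = - symp_form (polar_map X x) v *\<^sub>R x"
proof -
  define y where "y = polar_map X x"
  have cl: "closed X" using cb unfolding convex_body_def by (auto simp: compact_imp_closed)
  have xX: "x \<in> X" using x cl by (simp add: frontier_def closure_closed)
  have y: "y \<in> X" "symp_form x y = 1" using polar_map_props[OF cb X0 sp C2 x] y_def by auto
  have x0: "x \<noteq> 0" using y(2) by auto
  have h1: "inner (cJ x) y = 1" using y(2) by (simp add: symp_form_def)
  have sup: "\<forall>z\<in>X. inner (cJ x) z \<le> inner (cJ x) y"
  proof
    fix z assume "z \<in> X"
    then have "z \<in> symp_polar X" using sp by simp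
    then have "symp_form x z \<le> 1" using xX unfolding symp_polar_def by blast
    then show "inner (cJ x) z \<le> inner (cJ x) y" unfolding h1 by (simp add: symp_form_def)
  qed
  have u0: "cJ x \<noteq> 0" using x0 by simp
  have yf': "y \<in> frontier X" using yf y_def by simp
  have v': "v \<in> char_line (frontier X) y" using v y_def by simp
  obtain k where k: "cJ v = k *\<^sub>R cJ x" using char_par[OF cl C2 yf' u0 sup v'] by blast
  then have "cJ v = cJ (k *\<^sub>R x)" by (simp add: cJ_scaleR)
  then have vk: "v = k *\<^sub>R x" by simp
  have "symp_form y x = -1" using y(2) symp_antisym[of y x] by simp
  then have "symp_form y v = - k" using vk by simp
  then show ?thesis using vk y_def by simp
qed




lemma gronwall_side:
  fixes E D :: "real \<Rightarrow> real"
  assumes lohi: "lo \<le> hi"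
    and dE: "\<And>s. s \<in> {lo..hi} \<Longrightarrow> (E has_real_derivative D s) (at s within {lo..hi})"
    and E0: "\<And>s. s \<in> {lo..hi} \<Longrightarrow> E s \<ge> 0"
    and bd: "\<And>s. s \<in> {lo..hi} \<Longrightarrow> \<bar>D s\<bar> \<le> K * E s"
  shows "E lo = 0 \<Longrightarrow> E hi = 0" and "E hi = 0 \<Longrightarrow> E lo = 0"
proof -
  assume Elo: "E lo = 0"
  define F where "F s = E s * exp (- K * s)" for s
  define DF where "DF s = D s * exp (- K * s) + E s * (exp (- K * s) * (- K))" for s
  have dF: "(F has_derivative (\<lambda>h. DF s * h)) (at s within {lo..hi})" if "s \<in> {lo..hi}" for s
  proof -
    have dEs: "(E has_real_derivative D s) (at s within {lo..hi})" using dE that by blast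
    have "(F has_real_derivative DF s) (at s within {lo..hi})"
      unfolding F_def DF_def
      by (rule derivative_eq_intros dEs | simp)+
    then show ?thesis by (simp add: has_field_derivative_def)
  qed
  obtain x where x: "x \<in> {lo..hi}" "F hi - F lo = DF x * (hi - lo)"
    using mvt_very_simple[OF lohi dF] by fastforce
  have "DF x = (D x - K * E x) * exp (- K * x)" by (simp add: DF_def algebra_simps)
  moreover have "D x - K * E x \<le> 0" using bd[OF x(1)] by linarith
  ultimately have "DF x \<le> 0" by (simp add: mult_nonpos_nonneg)
  then have "DF x * (hi - lo) \<le> 0" using lohi by (simp add: mult_nonpos_nonneg)
  then have "F hi \<le> F lo" using x(2) by linarith
  then have "E hi * exp (- K * hi) \<le> 0" using Elo by (simp add: F_def)
  then have "E hi \<le> 0" by (simp add: mult_le_0_iff)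
  then show "E hi = 0" using E0[of hi] lohi by simp
next
  assume Ehi: "E hi = 0"
  define F where "F s = E s * exp (K * s)" for s
  define DF where "DF s = D s * exp (K * s) + E s * (exp (K * s) * K)" for s
  have dF: "(F has_derivative (\<lambda>h. DF s * h)) (at s within {lo..hi})" if "s \<in> {lo..hi}" for s
  proof -
    have dEs: "(E has_real_derivative D s) (at s within {lo..hi})" using dE that by blast
    have "(F has_real_derivative DF s) (at s within {lo..hi})"
      unfolding F_def DF_def
      by (rule derivative_eq_intros dEs | simp)+
    then show ?thesis by (simp add: has_field_derivative_def)
  qed
  obtain x where x: "x \<in> {lo..hi}" "F hi - F lo = DF x * (hi - lo)"
    using mvt_very_simple[OF lohi dF] by fastforce
  have "DF x = (D x + K * E x) * exp (K * x)" by (simp add: DF_def algebra_simps)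
  moreover have "D x + K * E x \<ge> 0" using bd[OF x(1)] by linarith
  ultimately have "DF x \<ge> 0" by simp
  then have "DF x * (hi - lo) \<ge> 0" using lohi by simp
  then have "F lo \<le> F hi" using x(2) by linarith
  then have "E lo * exp (K * lo) \<le> 0" using Ehi by (simp add: F_def)
  then have "E lo \<le> 0" by (simp add: mult_le_0_iff)
  then show "E lo = 0" using E0[of lo] lohi by simp
qed




lemma two_inner_le: "2 * \<bar>inner p q\<bar> \<le> inner p p + inner q (q::'v::real_inner)"
proof -
  have "0 \<le> inner (p - q) (p - q)" by simp
  moreover have "0 \<le> inner (p + q) (p + q)" by simp
  ultimately show ?thesis
    by (simp add: inner_diff_left inner_diff_right inner_add_left inner_add_right inner_commute abs_le_iff)
qed

lemma ode_zero:
  fixes p q :: "real \<Rightarrow> 'v::real_inner" and a b :: "real \<Rightarrow> real"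
  assumes I: "is_interval I" "t0 \<in> I" "t1 \<in> I"
    and dp: "\<And>t. t \<in> I \<Longrightarrow> (p has_vector_derivative a t *\<^sub>R q t) (at t within I)"
    and dq: "\<And>t. t \<in> I \<Longrightarrow> (q has_vector_derivative b t *\<^sub>R p t) (at t within I)"
    and ca: "continuous_on I a" and cb: "continuous_on I b"
    and p0: "p t0 = 0" and q0: "q t0 = 0"
  shows "p t1 = 0 \<and> q t1 = 0"
proof -
  define E where "E t = inner (p t) (p t) + inner (q t) (q t)" for t
  define D where "D t = inner (p t) (a t *\<^sub>R q t) + inner (a t *\<^sub>R q t) (p t)
      + (inner (q t) (b t *\<^sub>R p t) + inner (b t *\<^sub>R p t) (q t))" for t
  have dE: "(E has_real_derivative D t) (at t within I)" if "t \<in> I" for t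
  proof -
    have "(E has_vector_derivative D t) (at t within I)"
      unfolding E_def D_def
      by (intro has_vector_derivative_add
          bounded_bilinear.has_vector_derivative[OF bounded_bilinear_inner] dp dq that)
    then show ?thesis by (simp add: has_real_derivative_iff_has_vector_derivative)
  qed
  have Dbd: "\<bar>D t\<bar> \<le> \<bar>a t + b t\<bar> * E t" for t
  proof -
    have "D t = (a t + b t) * (2 * inner (p t) (q t))" by (simp add: D_def inner_commute algebra_simps)
    then have "\<bar>D t\<bar> = \<bar>a t + b t\<bar> * (2 * \<bar>inner (p t) (q t)\<bar>)" by (simp add: abs_mult)
    also have "\<dots> \<le> \<bar>a t + b t\<bar> * E t" unfolding E_def
      by (rule mult_left_mono[OF two_inner_le abs_ge_zero])
    finally show ?thesis .
  qed
  have E0: "E t \<ge> 0" for t by (simp add: E_def)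
  define lo where "lo = min t0 t1"
  define hi where "hi = max t0 t1"
  have lohi: "lo \<le> hi" by (simp add: lo_def hi_def)
  have sub: "{lo..hi} \<subseteq> I"
  proof
    fix x assume "x \<in> {lo..hi}"
    then have x: "lo \<le> x" "x \<le> hi" by auto
    have "lo \<in> I" "hi \<in> I" using I(2,3) by (simp_all add: lo_def hi_def min_def max_def)
    then show "x \<in> I" using I(1)[unfolded is_interval_1] x by meson
  qed
  have cab: "continuous_on {lo..hi} (\<lambda>s. a s + b s)"
    by (intro continuous_on_add continuous_on_subset[OF ca sub] continuous_on_subset[OF cb sub])
  have "bounded ((\<lambda>s. a s + b s) ` {lo..hi})"
    by (rule compact_imp_bounded[OF compact_continuous_image[OF cab compact_Icc]])
  then obtain K where K: "\<forall>x\<in>(\<lambda>s. a s + b s) ` {lo..hi}. \<bar>x\<bar> \<le> K" unfolding bounded_real by blast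
  have dE': "(E has_real_derivative D s) (at s within {lo..hi})" if "s \<in> {lo..hi}" for s
    by (rule has_field_derivative_subset[OF dE[OF subsetD[OF sub that]] sub])
  have bd: "\<bar>D s\<bar> \<le> K * E s" if "s \<in> {lo..hi}" for s
  proof -
    have "\<bar>a s + b s\<bar> \<le> K" using K that by blast
    then have "\<bar>a s + b s\<bar> * E s \<le> K * E s" using E0[of s] by (rule mult_right_mono)
    then show ?thesis using Dbd[of s] by linarith
  qed
  have Et0: "E t0 = 0" by (simp add: E_def p0 q0)
  have "E t1 = 0"
  proof (cases "t0 \<le> t1")
    case True
    then have "lo = t0" "hi = t1" by (auto simp: lo_def hi_def)
    then show ?thesis using gronwall_side(1)[OF lohi dE' E0 bd] Et0 by simp
  next
    case False
    then have "lo = t1" "hi = t0" by (auto simp: lo_def hi_def)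
    then show ?thesis using gronwall_side(2)[OF lohi dE' E0 bd] Et0 by simp
  qed
  then have "inner (p t1) (p t1) = 0 \<and> inner (q t1) (q t1) = 0"
    unfolding E_def using inner_ge_zero[of "p t1"] inner_ge_zero[of "q t1"] by (intro conjI; linarith)
  then show ?thesis by simp
qed




lemma dim2:
  fixes A B :: "complex ^ 'n"
  assumes "symp_form A B \<noteq> 0"
  shows "subspace (span {A, B}) \<and> dim (span {A, B}) = 2"
proof -
  have A0: "A \<noteq> 0" and B0: "B \<noteq> 0" using assms by auto
  have AB: "A \<noteq> B" using assms by auto
  have "A \<notin> span {B}"
  proof
    assume "A \<in> span {B}"
    then obtain k where "A = k *\<^sub>R B" unfolding span_singleton by auto
    then show False using assms by simp
  qed
  moreover have "independent {B}" using B0 by (simp add: independent_insert)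
  ultimately have "independent {A, B}" using AB by (simp add: independent_insert)
  then have "dim (span {A, B}) = card {A, B}" by (rule dim_span_eq_card_independent)
  then show ?thesis using AB by (simp add: subspace_span)
qed

lemma linear_Q:
  fixes A B :: "complex ^ 'n"
  shows "linear (\<lambda>z. z - symp_form z B *\<^sub>R A + symp_form z A *\<^sub>R B)"
  by (rule linearI) (simp_all add: symp_add_left algebra_simps)

theorem theorem4p4:
  fixes X :: "(complex ^ 'n) set" and I :: "real set" and \<gamma> :: "real \<Rightarrow> complex ^ 'n"
  assumes "convex_body X" and "0 \<in> interior X"
    and "symp_polar X = X"
    and "C2_boundary X"
    and "is_interval I"
    and "characteristic_curve (frontier X) I \<gamma>"
    and "characteristic_curve (frontier X) I (polar_map X \<circ> \<gamma>)"
  shows "\<exists>V. subspace V \<and> dim V = 2 \<and> \<gamma> ` I \<subseteq> V \<and> (polar_map X \<circ> \<gamma>) ` I \<subseteq> V"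
proof (cases "I = {}")
  case True
  define e :: "complex ^ 'n" where "e = (\<chi> k. 1)"
  have "e \<noteq> 0" by (simp add: e_def vec_eq_iff)
  then have "symp_form e (cJ e) \<noteq> 0" by (simp add: symp_form_def)
  then show ?thesis using dim2 True by blast
next
  case False
  note cb = assms(1) and X0 = assms(2) and sp = assms(3) and C2 = assms(4) and Iint = assms(5)
  define \<delta> where "\<delta> = polar_map X \<circ> \<gamma>"
  obtain \<gamma>' where g: "\<gamma> ` I \<subseteq> frontier X" "\<forall>t\<in>I. (\<gamma> has_vector_derivative \<gamma>' t) (at t within I)"
      "continuous_on I \<gamma>'" "\<forall>t\<in>I. \<gamma>' t \<in> char_line (frontier X) (\<gamma> t)"
    using assms(6) unfolding characteristic_curve_def by blast
  obtain \<delta>' where d: "\<delta> ` I \<subseteq> frontier X" "\<forall>t\<in>I. (\<delta> has_vector_derivative \<delta>' t) (at t within I)"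
      "continuous_on I \<delta>'" "\<forall>t\<in>I. \<delta>' t \<in> char_line (frontier X) (\<delta> t)"
    using assms(7) unfolding characteristic_curve_def \<delta>_def by blast
  define a where "a t = symp_form (\<gamma> t) (\<gamma>' t)" for t
  define b where "b t = - symp_form (\<delta> t) (\<delta>' t)" for t
  have ga: "\<gamma>' t = a t *\<^sub>R \<delta> t" if "t \<in> I" for t
    unfolding a_def \<delta>_def o_def
    using char_gamma[OF cb X0 sp C2 _ g(4)[rule_format, OF that]] g(1) that by blast
  have db: "\<delta>' t = b t *\<^sub>R \<gamma> t" if "t \<in> I" for t
  proof -
    have x: "\<gamma> t \<in> frontier X" using g(1) that by blast
    have y: "polar_map X (\<gamma> t) \<in> frontier X" using d(1) that unfolding \<delta>_def by auto
    have v: "\<delta>' t \<in> char_line (frontier X) (polar_map X (\<gamma> t))" using d(4) that unfolding \<delta>_def by auto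
    show ?thesis using char_delta[OF cb X0 sp C2 x y v] unfolding b_def \<delta>_def by simp
  qed
  have cg: "continuous_on I \<gamma>"
    using g(2) has_vector_derivative_continuous continuous_on_eq_continuous_within by blast
  have cd: "continuous_on I \<delta>"
    using d(2) has_vector_derivative_continuous continuous_on_eq_continuous_within by blast
  have ca: "continuous_on I a" unfolding a_def symp_form_def
    by (intro continuous_intros bounded_linear.continuous_on[OF bounded_linear_cJ] cg g(3))
  have cbb: "continuous_on I b" unfolding b_def symp_form_def
    by (intro continuous_intros bounded_linear.continuous_on[OF bounded_linear_cJ] cd d(3))
  obtain t0 where t0: "t0 \<in> I" using False by blast
  define A where "A = \<gamma> t0"
  define B where "B = \<delta> t0"
  have AB: "symp_form A B = 1"
    using polar_map_props[OF cb X0 sp C2] g(1) t0 unfolding A_def B_def \<delta>_def by auto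
  define Q where "Q z = z - symp_form z B *\<^sub>R A + symp_form z A *\<^sub>R B" for z
  have lQ: "linear Q" unfolding Q_def by (rule linear_Q)
  have blQ: "bounded_linear Q" using lQ by (simp add: linear_conv_bounded_linear)
  have BA: "symp_form B A = -1" using AB symp_antisym[of B A] by simp
  have QA: "Q A = 0" using AB by (simp add: Q_def)
  have QB: "Q B = 0" using BA by (simp add: Q_def)
  have Qscale: "Q (c *\<^sub>R z) = c *\<^sub>R Q z" for c z using lQ by (simp add: linear_scale)
  have zero: "Q (\<gamma> t) = 0 \<and> Q (\<delta> t) = 0" if t: "t \<in> I" for t
  proof (rule ode_zero[OF Iint t0 t, where a = a and b = b])
    fix s assume s: "s \<in> I"
    show "((\<lambda>s. Q (\<gamma> s)) has_vector_derivative a s *\<^sub>R Q (\<delta> s)) (at s within I)"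
      using bounded_linear.has_vector_derivative[OF blQ g(2)[rule_format, OF s]] ga[OF s] Qscale by simp
    show "((\<lambda>s. Q (\<delta> s)) has_vector_derivative b s *\<^sub>R Q (\<gamma> s)) (at s within I)"
      using bounded_linear.has_vector_derivative[OF blQ d(2)[rule_format, OF s]] db[OF s] Qscale by simp
  qed (use ca cbb QA QB A_def B_def in auto)
  have inV: "z \<in> span {A, B}" if "Q z = 0" for z
  proof -
    have "z = symp_form z B *\<^sub>R A - symp_form z A *\<^sub>R B" using that by (simp add: Q_def algebra_simps)
    also have "\<dots> \<in> span {A, B}" by (intro span_diff span_scale span_base) auto
    finally show ?thesis .
  qed
  have "subspace (span {A, B}) \<and> dim (span {A, B}) = 2" using AB by (intro dim2) simp
  moreover have "\<gamma> ` I \<subseteq> span {A, B}" using zero inV by blast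
  moreover have "(polar_map X \<circ> \<gamma>) ` I \<subseteq> span {A, B}" using zero inV unfolding \<delta>_def by blast
  ultimately show ?thesis by blast
qed


end
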